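(* Let $\mathcal{C}$ be a simplicial complex on ground set $V$ and $\mathbf{d}=(d_u)_{u\in V}$ with all $d_u\ge2$, and assume $\mathcal{A}_{\mathcal{C},\mathbf{d}}$ is unimodular. Let $v$ be a vertex of $\mathcal{C}$ and let $\mathbf{d}'$ be obtained from $\mathbf{d}$ by deleting the entry $d_v$. Then $\mathcal{A}_{\operatorname{link}_v(\mathcal{C}),\mathbf{d}'}$ is unimodular.
   Context: A simplicial complex on a finite ground set $V$ is a family of subsets of $V$ closed under subsets; facets are inclusion-maximal faces; a vertex $v$ of $\mathcal{C}$ means $\{v\}\in\mathcal{C}$. $\operatorname{link}_v(\mathcal{C})=\{F\setminus\{v\}: v\in F\in\mathcal{C}\}$ on ground set $V\setminus\{v\}$. $\mathcal{A}_{\mathcal{C},\mathbf{d}}$ is the $0/1$ matrix with columns indexed by $\mathbf{i}\in\prod_{u\in V}[d_u]$ and rows indexed by pairs $(F,\mathbf{e})$, $F$ a facet, $\mathbf{e}\in\prod_{u\in F}[d_u]$; entry $1$ iff $\mathbf{e}=\mathbf{i}|_F$. An integer matrix is unimodular if every circuit (nonzero integer kernel vector with coprime entries and inclusion-minimal support among nonzero kernel vectors) has all entries in $\{0,\pm1\}$. *)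

theory Defs
  imports "HOL-Library.FuncSet"
begin

definition simplicial_complex :: "'a set \<Rightarrow> 'a set set \<Rightarrow> bool" where
  "simplicial_complex V C \<longleftrightarrow> finite V \<and> (\<forall>F\<in>C. F \<subseteq> V) \<and> (\<forall>F\<in>C. \<forall>G. G \<subseteq> F \<longrightarrow> G \<in> C)"

definition facets :: "'a set set \<Rightarrow> 'a set set" where
  "facets C = {F \<in> C. \<not> (\<exists>G\<in>C. F \<subset> G)}"

definition link :: "'a \<Rightarrow> 'a set set \<Rightarrow> 'a set set" where
  "link v C = {F - {v} | F. v \<in> F \<and> F \<in> C}"

definition int_kernel_vec :: "'r set \<Rightarrow> 'c set \<Rightarrow> ('r \<Rightarrow> 'c \<Rightarrow> int) \<Rightarrow> ('c \<Rightarrow> int) \<Rightarrow> bool" where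
  "int_kernel_vec R K M z \<longleftrightarrow> (\<forall>c. c \<notin> K \<longrightarrow> z c = 0) \<and> (\<forall>r\<in>R. (\<Sum>c\<in>K. M r c * z c) = 0)"

definition supp :: "('c \<Rightarrow> int) \<Rightarrow> 'c set" where
  "supp z = {c. z c \<noteq> 0}"

definition circuit :: "'r set \<Rightarrow> 'c set \<Rightarrow> ('r \<Rightarrow> 'c \<Rightarrow> int) \<Rightarrow> ('c \<Rightarrow> int) \<Rightarrow> bool" where
  "circuit R K M z \<longleftrightarrow> int_kernel_vec R K M z \<and> z \<noteq> (\<lambda>_. 0) \<and> Gcd (z ` K) = 1 \<and>
     \<not> (\<exists>y. int_kernel_vec R K M y \<and> y \<noteq> (\<lambda>_. 0) \<and> supp y \<subset> supp z)"

definition unimodular :: "'r set \<Rightarrow> 'c set \<Rightarrow> ('r \<Rightarrow> 'c \<Rightarrow> int) \<Rightarrow> bool" where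
  "unimodular R K M \<longleftrightarrow> (\<forall>z. circuit R K M z \<longrightarrow> (\<forall>c. z c \<in> {-1, 0, 1}))"

text \<open>The matrix A_{C,d}; [d_u] is rendered as {0..<d u}. Columns: extensional functions on V.\<close>
definition A_cols :: "'a set \<Rightarrow> ('a \<Rightarrow> nat) \<Rightarrow> ('a \<Rightarrow> nat) set" where
  "A_cols V d = (\<Pi>\<^sub>E u\<in>V. {..<d u})"

definition A_rows :: "'a set set \<Rightarrow> ('a \<Rightarrow> nat) \<Rightarrow> ('a set \<times> ('a \<Rightarrow> nat)) set" where
  "A_rows C d = {(F, e). F \<in> facets C \<and> e \<in> (\<Pi>\<^sub>E u\<in>F. {..<d u})}"

definition A_entry :: "('a set \<times> ('a \<Rightarrow> nat)) \<Rightarrow> ('a \<Rightarrow> nat) \<Rightarrow> int" where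
  "A_entry r i = (if snd r = restrict i (fst r) then 1 else 0)"

definition A_unimodular :: "'a set \<Rightarrow> 'a set set \<Rightarrow> ('a \<Rightarrow> nat) \<Rightarrow> bool" where
  "A_unimodular V C d \<longleftrightarrow> unimodular (A_rows C d) (A_cols V d) A_entry"

end

theory Submission imports Defs begin

lemma sum_cols_split:
  assumes "v \<in> V"
  shows "(\<Sum>i\<in>A_cols V d. f i) = (\<Sum>k<d v. \<Sum>j\<in>A_cols (V-{v}) d. f (j(v:=k)))"
proof -
  have V: "V = insert v (V-{v})" using assms by blast
  have "A_cols V d = (\<lambda>(y, g). g(v := y)) ` ({..<d v} \<times> A_cols (V-{v}) d)"
    unfolding A_cols_def by (subst V, subst PiE_insert_eq) simp
  moreover have "inj_on (\<lambda>(y, g). g(v := y)) ({..<d v} \<times> A_cols (V-{v}) d)"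
    unfolding A_cols_def using inj_combinator[of v "V-{v}" "\<lambda>u. {..<d u}"] by simp
  ultimately have "(\<Sum>i\<in>A_cols V d. f i) = (\<Sum>p\<in>{..<d v} \<times> A_cols (V-{v}) d. f ((\<lambda>(y, g). g(v := y)) p))"
    by (simp add: sum.reindex)
  also have "\<dots> = (\<Sum>k<d v. \<Sum>j\<in>A_cols (V-{v}) d. f (j(v:=k)))"
    by (simp add: sum.cartesian_product split_def)
  finally show ?thesis .
qed

lemma cols_ext:
  assumes "j \<in> A_cols (V-{v}) d" "k < d v" "v \<in> V"
  shows "j(v:=k) \<in> A_cols V d" "restrict (j(v:=k)) (V-{v}) = j"
  using assms by (auto simp: A_cols_def PiE_def extensional_def fun_eq_iff)

lemma cols_res:
  assumes "i \<in> A_cols V d"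
  shows "restrict i (V-{v}) \<in> A_cols (V-{v}) d" "(restrict i (V-{v}))(v := i v) = i"
  using assms by (auto simp: A_cols_def PiE_def extensional_def fun_eq_iff)

lemma cols_v_lt: "i \<in> A_cols V d \<Longrightarrow> v \<in> V \<Longrightarrow> i v < d v"
  by (auto simp: A_cols_def)

lemma restrict_eq_iff: "e \<in> extensional F \<Longrightarrow> (restrict f F = e) \<longleftrightarrow> (\<forall>u\<in>F. f u = e u)"
  by (auto simp: fun_eq_iff restrict_def extensional_def)

lemma entry_in:
  assumes "v \<in> F" "e \<in> (\<Pi>\<^sub>E u\<in>F. {..<d u})"
  shows "A_entry (F,e) (j(v:=k)) = (if k = e v then A_entry (F-{v}, restrict e (F-{v})) j else 0)"
proof -
  have e: "e \<in> extensional F" using assms(2) by (simp add: PiE_def)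
  have "(restrict (j(v:=k)) F = e) \<longleftrightarrow> (k = e v \<and> restrict j (F-{v}) = restrict e (F-{v}))"
    using assms(1) e by (auto simp: restrict_eq_iff[OF e] fun_eq_iff restrict_def extensional_def)
  then show ?thesis by (auto simp: A_entry_def)
qed

lemma entry_out:
  assumes "v \<notin> F"
  shows "A_entry (F,e) (j(v:=k)) = A_entry (F,e) j"
proof -
  have "restrict (j(v:=k)) F = restrict j F" using assms by (auto simp: restrict_def fun_eq_iff)
  then show ?thesis by (simp add: A_entry_def)
qed

lemma facet_link1:
  assumes "G \<in> facets (link v C)"
  shows "v \<notin> G" "insert v G \<in> facets C"
proof -
  from assms obtain F where F: "G = F - {v}" "v \<in> F" "F \<in> C" "\<not> (\<exists>H\<in>link v C. G \<subset> H)"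
    by (auto simp: facets_def link_def)
  show "v \<notin> G" using F by auto
  have "insert v G = F" using F by auto
  moreover have "\<not> (\<exists>H\<in>C. F \<subset> H)"
  proof
    assume "\<exists>H\<in>C. F \<subset> H"
    then obtain H where H: "H \<in> C" "F \<subset> H" by auto
    then have "H - {v} \<in> link v C" using F by (auto simp: link_def)
    moreover have "G \<subset> H - {v}" using H F by auto
    ultimately show False using F by auto
  qed
  ultimately show "insert v G \<in> facets C" using F by (auto simp: facets_def)
qed

lemma facet_link2:
  assumes "F \<in> facets C" "v \<in> F"
  shows "F - {v} \<in> facets (link v C)"
proof -
  have "F - {v} \<in> link v C" using assms by (auto simp: facets_def link_def)
  moreover have "\<not> (\<exists>H\<in>link v C. F - {v} \<subset> H)"
  proof
    assume "\<exists>H\<in>link v C. F - {v} \<subset> H"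
    then obtain H where H: "v \<in> H" "H \<in> C" "F - {v} \<subset> H - {v}" by (auto simp: link_def)
    then have "F \<subset> H" using assms by auto
    then show False using assms H by (auto simp: facets_def)
  qed
  ultimately show ?thesis by (auto simp: facets_def)
qed


definition slice :: "'a set \<Rightarrow> ('a \<Rightarrow> nat) \<Rightarrow> 'a \<Rightarrow> (('a \<Rightarrow> nat) \<Rightarrow> int) \<Rightarrow> nat \<Rightarrow> ('a \<Rightarrow> nat) \<Rightarrow> int" where
  "slice V d v y k = (\<lambda>j. if j \<in> A_cols (V-{v}) d then y (j(v:=k)) else 0)"

definition emb :: "'a set \<Rightarrow> ('a \<Rightarrow> nat) \<Rightarrow> 'a \<Rightarrow> (nat \<Rightarrow> int) \<Rightarrow> (('a \<Rightarrow> nat) \<Rightarrow> int) \<Rightarrow> ('a \<Rightarrow> nat) \<Rightarrow> int" where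
  "emb V d v s w = (\<lambda>i. if i \<in> A_cols V d then s (i v) * w (restrict i (V-{v})) else 0)"

lemma rows_in: "(F,e) \<in> A_rows C d \<longleftrightarrow> F \<in> facets C \<and> e \<in> (\<Pi>\<^sub>E u\<in>F. {..<d u})"
  by (simp add: A_rows_def)

lemma slice_kernel:
  assumes "v \<in> V" "int_kernel_vec (A_rows C d) (A_cols V d) A_entry y" "k < d v"
  shows "int_kernel_vec (A_rows (link v C) d) (A_cols (V-{v}) d) A_entry (slice V d v y k)"
  unfolding int_kernel_vec_def
proof (intro conjI allI impI ballI)
  fix c assume "c \<notin> A_cols (V-{v}) d" then show "slice V d v y k c = 0" by (simp add: slice_def)
next
  fix r assume r: "r \<in> A_rows (link v C) d"
  obtain G e' where r': "r = (G,e')" by (cases r)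
  have G: "G \<in> facets (link v C)" and e': "e' \<in> (\<Pi>\<^sub>E u\<in>G. {..<d u})" using r r' by (auto simp: rows_in)
  have vG: "v \<notin> G" and F: "insert v G \<in> facets C" using facet_link1[OF G] by auto
  define e where "e = e'(v:=k)"
  have e: "e \<in> (\<Pi>\<^sub>E u\<in>insert v G. {..<d u})" using e' assms(3) by (auto simp: e_def PiE_def extensional_def)
  have re: "restrict e G = e'" using e' vG
    by (auto simp: e_def PiE_def extensional_def restrict_def fun_eq_iff)
  have ev: "e v = k" by (simp add: e_def)
  have GG: "insert v G - {v} = G" using vG by auto
  have "0 = (\<Sum>i\<in>A_cols V d. A_entry (insert v G, e) i * y i)"
    using assms(2) F e by (auto simp: int_kernel_vec_def rows_in)
  also have "\<dots> = (\<Sum>k'<d v. \<Sum>j\<in>A_cols (V-{v}) d. A_entry (insert v G, e) (j(v:=k')) * y (j(v:=k')))"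
    by (rule sum_cols_split[OF assms(1)])
  also have "\<dots> = (\<Sum>k'<d v. if k' = k then (\<Sum>j\<in>A_cols (V-{v}) d. A_entry (G, e') j * y (j(v:=k))) else 0)"
    by (rule sum.cong[OF refl]) (auto simp: entry_in[OF _ e] ev re GG)
  also have "\<dots> = (\<Sum>j\<in>A_cols (V-{v}) d. A_entry (G, e') j * y (j(v:=k)))"
    using assms(3) by simp
  also have "\<dots> = (\<Sum>j\<in>A_cols (V-{v}) d. A_entry r j * slice V d v y k j)"
    by (rule sum.cong[OF refl]) (simp add: slice_def r')
  finally show "(\<Sum>j\<in>A_cols (V-{v}) d. A_entry r j * slice V d v y k j) = 0" by simp
qed

lemma emb_kernel:
  assumes "v \<in> V" "int_kernel_vec (A_rows (link v C) d) (A_cols (V-{v}) d) A_entry w"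
    and hs: "\<And>F e. (F,e) \<in> A_rows C d \<Longrightarrow> v \<notin> F \<Longrightarrow>
           (\<Sum>k<d v. s k) * (\<Sum>j\<in>A_cols (V-{v}) d. A_entry (F,e) j * w j) = 0"
  shows "int_kernel_vec (A_rows C d) (A_cols V d) A_entry (emb V d v s w)"
  unfolding int_kernel_vec_def
proof (intro conjI allI impI ballI)
  fix c assume "c \<notin> A_cols V d" then show "emb V d v s w c = 0" by (simp add: emb_def)
next
  fix r assume r: "r \<in> A_rows C d"
  obtain F e where r': "r = (F,e)" by (cases r)
  have F: "F \<in> facets C" and e: "e \<in> (\<Pi>\<^sub>E u\<in>F. {..<d u})" using r r' by (auto simp: rows_in)
  have "(\<Sum>i\<in>A_cols V d. A_entry r i * emb V d v s w i)
     = (\<Sum>k<d v. \<Sum>j\<in>A_cols (V-{v}) d. A_entry (F,e) (j(v:=k)) * emb V d v s w (j(v:=k)))"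
    unfolding r' by (rule sum_cols_split[OF assms(1)])
  also have "\<dots> = (\<Sum>k<d v. \<Sum>j\<in>A_cols (V-{v}) d. A_entry (F,e) (j(v:=k)) * (s k * w j))"
  proof (intro sum.cong refl)
    fix k j assume "k \<in> {..<d v}" "j \<in> A_cols (V-{v}) d"
    then have "j(v:=k) \<in> A_cols V d" "restrict (j(v:=k)) (V-{v}) = j" using cols_ext[OF _ _ assms(1)] by auto
    then show "A_entry (F,e) (j(v:=k)) * emb V d v s w (j(v:=k)) = A_entry (F,e) (j(v:=k)) * (s k * w j)"
      by (simp add: emb_def)
  qed
  also have "\<dots> = 0"
  proof (cases "v \<in> F")
    case True
    have r2: "(F - {v}, restrict e (F-{v})) \<in> A_rows (link v C) d"
      using facet_link2[OF F True] e by (auto simp: rows_in PiE_def extensional_def)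
    have z: "(\<Sum>j\<in>A_cols (V-{v}) d. A_entry (F - {v}, restrict e (F-{v})) j * w j) = 0"
      using assms(2) r2 by (simp add: int_kernel_vec_def)
    have "(\<Sum>j\<in>A_cols (V-{v}) d. A_entry (F,e) (j(v:=k)) * (s k * w j)) = 0" for k
    proof -
      have "(\<Sum>j\<in>A_cols (V-{v}) d. A_entry (F,e) (j(v:=k)) * (s k * w j))
         = (if k = e v then s k * (\<Sum>j\<in>A_cols (V-{v}) d. A_entry (F - {v}, restrict e (F-{v})) j * w j) else 0)"
        by (auto simp: entry_in[OF True e] sum_distrib_left algebra_simps)
      then show ?thesis using z by simp
    qed
    then show ?thesis by simp
  next
    case False
    have "(\<Sum>k<d v. \<Sum>j\<in>A_cols (V-{v}) d. A_entry (F,e) (j(v:=k)) * (s k * w j))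
       = (\<Sum>k<d v. s k * (\<Sum>j\<in>A_cols (V-{v}) d. A_entry (F,e) j * w j))"
      by (simp add: entry_out[OF False] sum_distrib_left algebra_simps)
    also have "\<dots> = (\<Sum>k<d v. s k) * (\<Sum>j\<in>A_cols (V-{v}) d. A_entry (F,e) j * w j)"
      by (simp add: sum_distrib_right)
    also have "\<dots> = 0" using hs r r' False by simp
    finally show ?thesis .
  qed
  finally show "(\<Sum>i\<in>A_cols V d. A_entry r i * emb V d v s w i) = 0" .
qed

lemma kernel_lin:
  assumes "int_kernel_vec R K M y" "int_kernel_vec R K M z"
  shows "int_kernel_vec R K M (\<lambda>x. a * y x - b * z x)"
  using assms by (auto simp: int_kernel_vec_def algebra_simps sum_subtractf sum_distrib_left[symmetric])

lemma circuit_prop: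
  assumes "circuit R K M z" "int_kernel_vec R K M y" "supp y \<subseteq> supp z" "z c \<noteq> 0"
  shows "z c * y x = y c * z x"
proof -
  let ?w = "\<lambda>x. z c * y x - y c * z x"
  have k: "int_kernel_vec R K M ?w" by (rule kernel_lin[OF assms(2)]) (use assms(1) in \<open>simp add: circuit_def\<close>)
  have "supp ?w \<subset> supp z"
  proof
    show "supp ?w \<subseteq> supp z" using assms(3) by (auto simp: supp_def)
    have "c \<notin> supp ?w" by (simp add: supp_def)
    moreover have "c \<in> supp z" using assms(4) by (simp add: supp_def)
    ultimately show "supp ?w \<noteq> supp z" by blast
  qed
  then have "?w = (\<lambda>_. 0)" using assms(1) k unfolding circuit_def by blast
  then show ?thesis by (auto simp: fun_eq_iff dest: fun_cong[of _ _ x])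
qed


lemma emb_val:
  assumes "v \<in> V" "j \<in> A_cols (V-{v}) d" "k < d v"
  shows "emb V d v s w (j(v:=k)) = s k * w j"
  using cols_ext[OF assms(2,3,1)] by (simp add: emb_def)

lemma supp_emb: "i \<in> supp (emb V d v s w) \<longleftrightarrow> i \<in> A_cols V d \<and> s (i v) \<noteq> 0 \<and> w (restrict i (V-{v})) \<noteq> 0"
  by (auto simp: supp_def emb_def)

lemma y_recon:
  assumes "supp y \<subseteq> supp (emb V d v s w)"
  shows "y i = (if i \<in> A_cols V d then slice V d v y (i v) (restrict i (V-{v})) else 0)"
proof (cases "i \<in> A_cols V d")
  case True
  then show ?thesis using cols_res[OF True, of v] by (simp add: slice_def)
next
  case False
  then have "i \<notin> supp y" using assms by (auto simp: supp_emb)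
  then show ?thesis using False by (simp add: supp_def)
qed

lemma emb_circuit:
  assumes vV: "v \<in> V" and dv: "0 < d v" and s0: "s 0 = 1"
    and circ: "circuit (A_rows (link v C) d) (A_cols (V-{v}) d) A_entry z"
    and ker: "int_kernel_vec (A_rows C d) (A_cols V d) A_entry (emb V d v s z)"
    and mini: "\<And>y. int_kernel_vec (A_rows C d) (A_cols V d) A_entry y \<Longrightarrow> y \<noteq> (\<lambda>_. 0)
                 \<Longrightarrow> supp y \<subset> supp (emb V d v s z) \<Longrightarrow> False"
  shows "circuit (A_rows C d) (A_cols V d) A_entry (emb V d v s z)"
  unfolding circuit_def
proof (intro conjI)
  show "int_kernel_vec (A_rows C d) (A_cols V d) A_entry (emb V d v s z)" by (rule ker)
  have kz: "int_kernel_vec (A_rows (link v C) d) (A_cols (V-{v}) d) A_entry z"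
    and nz: "z \<noteq> (\<lambda>_. 0)" and gz: "Gcd (z ` A_cols (V-{v}) d) = 1"
    using circ by (auto simp: circuit_def)
  obtain c where c: "z c \<noteq> 0" using nz by auto
  then have cK: "c \<in> A_cols (V-{v}) d" using kz by (auto simp: int_kernel_vec_def)
  show "emb V d v s z \<noteq> (\<lambda>_. 0)"
  proof
    assume "emb V d v s z = (\<lambda>_. 0)"
    then have "emb V d v s z (c(v:=0)) = 0" by simp
    then show False using emb_val[OF vV cK dv, of s z] s0 c by simp
  qed
  let ?g = "Gcd (emb V d v s z ` A_cols V d)"
  have "?g dvd z j" if j: "j \<in> A_cols (V-{v}) d" for j
  proof -
    have "j(v:=0) \<in> A_cols V d" using cols_ext[OF j dv vV] by simp
    then have "?g dvd emb V d v s z (j(v:=0))" by (simp add: Gcd_dvd)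
    then show ?thesis using emb_val[OF vV j dv, of s z] s0 by simp
  qed
  then have "?g dvd Gcd (z ` A_cols (V-{v}) d)" by (auto intro: Gcd_greatest)
  then have "?g dvd 1" using gz by simp
  then have "\<bar>?g\<bar> = 1" by (simp add: zdvd1_eq)
  moreover have "?g \<ge> 0" by simp
  ultimately show "?g = 1" by simp
  show "\<not> (\<exists>y. int_kernel_vec (A_rows C d) (A_cols V d) A_entry y \<and> y \<noteq> (\<lambda>_. 0) \<and> supp y \<subset> supp (emb V d v s z))"
    using mini by blast
qed

lemma slice_dich:
  assumes vV: "v \<in> V"
    and circ: "circuit (A_rows (link v C) d) (A_cols (V-{v}) d) A_entry z"
    and ky: "int_kernel_vec (A_rows C d) (A_cols V d) A_entry y"
    and sy: "supp y \<subseteq> supp (emb V d v s z)" and k: "k < d v"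
  shows "slice V d v y k = (\<lambda>_. 0) \<or> supp (slice V d v y k) = supp z"
    and "s k = 0 \<Longrightarrow> slice V d v y k = (\<lambda>_. 0)"
proof -
  have ss: "supp (slice V d v y k) \<subseteq> supp z"
  proof
    fix j assume "j \<in> supp (slice V d v y k)"
    then have j: "j \<in> A_cols (V-{v}) d" "y (j(v:=k)) \<noteq> 0" by (auto simp: supp_def slice_def split: if_splits)
    then have "j(v:=k) \<in> supp (emb V d v s z)" using sy by (auto simp: supp_def)
    then have "z (restrict (j(v:=k)) (V-{v})) \<noteq> 0" unfolding supp_emb by blast
    then show "j \<in> supp z" unfolding cols_ext(2)[OF j(1) k vV] by (simp add: supp_def)
  qed
  show "slice V d v y k = (\<lambda>_. 0) \<or> supp (slice V d v y k) = supp z"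
  proof (rule ccontr)
    assume "\<not> ?thesis"
    then have "slice V d v y k \<noteq> (\<lambda>_. 0)" "supp (slice V d v y k) \<subset> supp z" using ss by auto
    moreover have "int_kernel_vec (A_rows (link v C) d) (A_cols (V-{v}) d) A_entry (slice V d v y k)"
      by (rule slice_kernel[OF vV ky k])
    ultimately show False using circ unfolding circuit_def by blast
  qed
  assume sk: "s k = 0"
  show "slice V d v y k = (\<lambda>_. 0)"
  proof
    fix j
    show "slice V d v y k j = 0"
    proof (rule ccontr)
      assume "slice V d v y k j \<noteq> 0"
      then have j: "j \<in> A_cols (V-{v}) d" "y (j(v:=k)) \<noteq> 0" by (auto simp: slice_def split: if_splits)
      then have "j(v:=k) \<in> supp (emb V d v s z)" using sy by (auto simp: supp_def)
      then show False using sk by (simp add: supp_emb)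
    qed
  qed
qed


lemma one_full_P:
  assumes vV: "v \<in> V"
    and circ: "circuit (A_rows (link v C) d) (A_cols (V-{v}) d) A_entry z"
    and ky: "int_kernel_vec (A_rows C d) (A_cols V d) A_entry y"
    and k0: "k0 < d v" and full: "supp (slice V d v y k0) = supp z"
    and oth: "\<And>k. k < d v \<Longrightarrow> k \<noteq> k0 \<Longrightarrow> slice V d v y k = (\<lambda>_. 0)"
    and r: "(F,e) \<in> A_rows C d" and vF: "v \<notin> F"
  shows "(\<Sum>j\<in>A_cols (V-{v}) d. A_entry (F,e) j * z j) = 0"
proof -
  let ?K' = "A_cols (V-{v}) d"
  let ?ys = "slice V d v y k0"
  have nz: "z \<noteq> (\<lambda>_. 0)" using circ by (simp add: circuit_def)
  obtain c where c: "z c \<noteq> 0" using nz by auto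
  have ysc: "?ys c \<noteq> 0" using full c by (auto simp: supp_def set_eq_iff)
  have kys: "int_kernel_vec (A_rows (link v C) d) ?K' A_entry ?ys" by (rule slice_kernel[OF vV ky k0])
  have pr: "z c * ?ys j = ?ys c * z j" for j
    using circuit_prop[OF circ kys] full c by simp
  have "0 = (\<Sum>i\<in>A_cols V d. A_entry (F,e) i * y i)"
    using ky r by (auto simp: int_kernel_vec_def)
  also have "\<dots> = (\<Sum>k<d v. \<Sum>j\<in>?K'. A_entry (F,e) (j(v:=k)) * y (j(v:=k)))"
    by (rule sum_cols_split[OF vV])
  also have "\<dots> = (\<Sum>k<d v. \<Sum>j\<in>?K'. A_entry (F,e) j * slice V d v y k j)"
    by (intro sum.cong refl) (simp add: entry_out[OF vF] slice_def)
  also have "\<dots> = (\<Sum>j\<in>?K'. A_entry (F,e) j * ?ys j)"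
  proof -
    have "(\<Sum>k<d v. \<Sum>j\<in>?K'. A_entry (F,e) j * slice V d v y k j)
        = (\<Sum>k\<in>{k0}. \<Sum>j\<in>?K'. A_entry (F,e) j * slice V d v y k j)"
      by (rule sum.mono_neutral_right) (use k0 oth in auto)
    then show ?thesis by simp
  qed
  finally have s0: "(\<Sum>j\<in>?K'. A_entry (F,e) j * ?ys j) = 0" by simp
  have "?ys c * (\<Sum>j\<in>?K'. A_entry (F,e) j * z j) = (\<Sum>j\<in>?K'. A_entry (F,e) j * (?ys c * z j))"
    by (simp add: sum_distrib_left algebra_simps)
  also have "\<dots> = (\<Sum>j\<in>?K'. A_entry (F,e) j * (z c * ?ys j))" by (simp add: pr)
  also have "\<dots> = z c * (\<Sum>j\<in>?K'. A_entry (F,e) j * ?ys j)"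
    by (simp add: sum_distrib_left algebra_simps)
  also have "\<dots> = 0" using s0 by simp
  finally show ?thesis using ysc by simp
qed


lemma y_zero:
  assumes vV: "v \<in> V" and sy: "supp y \<subseteq> supp (emb V d v s w)"
    and all: "\<And>k. k < d v \<Longrightarrow> slice V d v y k = (\<lambda>_. 0)"
  shows "y = (\<lambda>_. 0)"
proof
  fix i
  show "y i = 0"
  proof (cases "i \<in> A_cols V d")
    case True
    then have "i v < d v" by (rule cols_v_lt[OF _ vV])
    then have "slice V d v y (i v) = (\<lambda>_. 0)" by (rule all)
    moreover have "y i = (if i \<in> A_cols V d then slice V d v y (i v) (restrict i (V-{v})) else 0)"
      by (rule y_recon[OF sy])
    ultimately show ?thesis using True by simp
  next
    case False
    have "y i = (if i \<in> A_cols V d then slice V d v y (i v) (restrict i (V-{v})) else 0)"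
      by (rule y_recon[OF sy])
    then show ?thesis using False by simp
  qed
qed


lemma y_full:
  assumes vV: "v \<in> V" and sy: "supp y \<subseteq> supp (emb V d v s w)"
    and full: "\<And>k. k < d v \<Longrightarrow> s k \<noteq> 0 \<Longrightarrow> supp (slice V d v y k) = supp w"
  shows "supp (emb V d v s w) \<subseteq> supp y"
proof
  fix i assume "i \<in> supp (emb V d v s w)"
  then have i: "i \<in> A_cols V d" "s (i v) \<noteq> 0" "w (restrict i (V-{v})) \<noteq> 0" by (auto simp: supp_emb)
  have "i v < d v" by (rule cols_v_lt[OF i(1) vV])
  then have "supp (slice V d v y (i v)) = supp w" using i(2) by (rule full)
  moreover have "restrict i (V-{v}) \<in> supp w" using i(3) by (simp add: supp_def)
  ultimately have "slice V d v y (i v) (restrict i (V-{v})) \<noteq> 0" unfolding supp_def by blast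
  moreover have "y i = (if i \<in> A_cols V d then slice V d v y (i v) (restrict i (V-{v})) else 0)"
    by (rule y_recon[OF sy])
  ultimately show "i \<in> supp y" using i(1) by (simp add: supp_def)
qed

theorem corollary7p4:
  fixes V :: "'a set" and C :: "'a set set" and d :: "'a \<Rightarrow> nat" and v :: 'a
  assumes "simplicial_complex V C"
    and "\<forall>u\<in>V. d u \<ge> 2"
    and "A_unimodular V C d"
    and "{v} \<in> C"
  shows "A_unimodular (V - {v}) (link v C) d"
proof -
  from assms(1,4) have vV: "v \<in> V" by (auto simp: simplicial_complex_def)
  have dv: "2 \<le> d v" using assms(2) vV by auto
  then have dv0: "0 < d v" by simp
  show ?thesis unfolding A_unimodular_def unimodular_def
  proof (rule allI, rule impI)
    fix z assume circ: "circuit (A_rows (link v C) d) (A_cols (V-{v}) d) A_entry z"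
    have kz: "int_kernel_vec (A_rows (link v C) d) (A_cols (V-{v}) d) A_entry z"
      using circ by (simp add: circuit_def)
    define P where "P \<longleftrightarrow> (\<forall>F e. (F,e) \<in> A_rows C d \<longrightarrow> v \<notin> F \<longrightarrow>
        (\<Sum>j\<in>A_cols (V-{v}) d. A_entry (F,e) j * z j) = 0)"
    obtain s where s0: "s 0 = 1" and sc: "circuit (A_rows C d) (A_cols V d) A_entry (emb V d v s z)"
    proof (cases P)
      case True
      let ?s = "\<lambda>k::nat. if k = 0 then (1::int) else 0"
      have ker: "int_kernel_vec (A_rows C d) (A_cols V d) A_entry (emb V d v ?s z)"
        by (rule emb_kernel[OF vV kz]) (use True in \<open>auto simp: P_def\<close>)
      have "circuit (A_rows C d) (A_cols V d) A_entry (emb V d v ?s z)"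
      proof (rule emb_circuit[OF vV dv0 _ circ ker])
        show "?s 0 = 1" by simp
        fix y assume ky: "int_kernel_vec (A_rows C d) (A_cols V d) A_entry y"
          and ny: "y \<noteq> (\<lambda>_. 0)" and sy: "supp y \<subset> supp (emb V d v ?s z)"
        have sy': "supp y \<subseteq> supp (emb V d v ?s z)" using sy by auto
        have dk: "slice V d v y k = (\<lambda>_. 0)" if "k < d v" "k \<noteq> 0" for k
          using slice_dich(2)[OF vV circ ky sy' that(1)] that(2) by simp
        show False
        proof (cases "slice V d v y 0 = (\<lambda>_. 0)")
          case True
          have "y = (\<lambda>_. 0)"
            by (rule y_zero[OF vV sy']) (use True dk in \<open>fastforce\<close>)
          then show False using ny by simp
        next
          case False
          then have f0: "supp (slice V d v y 0) = supp z"
            using slice_dich(1)[OF vV circ ky sy' dv0] by simp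
          have "supp (emb V d v ?s z) \<subseteq> supp y"
            by (rule y_full[OF vV sy']) (use f0 in \<open>auto split: if_splits\<close>)
          then show False using sy by auto
        qed
      qed
      then show thesis by (intro that[of ?s]) simp_all
    next
      case False
      let ?s = "\<lambda>k::nat. if k = 0 then (1::int) else if k = 1 then -1 else 0"
      have sum0: "(\<Sum>k<d v. ?s k) = 0"
      proof -
        have "(\<Sum>k<d v. ?s k) = (\<Sum>k\<in>{0,1}. ?s k)"
          by (rule sum.mono_neutral_right) (use dv in auto)
        then show ?thesis by simp
      qed
      have ker: "int_kernel_vec (A_rows C d) (A_cols V d) A_entry (emb V d v ?s z)"
        by (rule emb_kernel[OF vV kz]) (simp only: sum0 mult_zero_left)
      have "circuit (A_rows C d) (A_cols V d) A_entry (emb V d v ?s z)"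
      proof (rule emb_circuit[OF vV dv0 _ circ ker])
        show "?s 0 = 1" by simp
        fix y assume ky: "int_kernel_vec (A_rows C d) (A_cols V d) A_entry y"
          and ny: "y \<noteq> (\<lambda>_. 0)" and sy: "supp y \<subset> supp (emb V d v ?s z)"
        have sy': "supp y \<subseteq> supp (emb V d v ?s z)" using sy by auto
        have d1: "1 < d v" using dv by simp
        have dk: "slice V d v y k = (\<lambda>_. 0)" if "k < d v" "k \<noteq> 0" "k \<noteq> 1" for k
          using slice_dich(2)[OF vV circ ky sy' that(1)] that(2,3) by simp
        have c0: "slice V d v y 0 = (\<lambda>_. 0) \<or> supp (slice V d v y 0) = supp z"
          using slice_dich(1)[OF vV circ ky sy' dv0] .
        have c1: "slice V d v y 1 = (\<lambda>_. 0) \<or> supp (slice V d v y 1) = supp z"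
          using slice_dich(1)[OF vV circ ky sy' d1] .
        have notP: "\<not> P" by (rule False)
        show False
        proof (cases "slice V d v y 0 = (\<lambda>_. 0)")
          case T0: True
          show False
          proof (cases "slice V d v y 1 = (\<lambda>_. 0)")
            case T1: True
            have "y = (\<lambda>_. 0)"
              by (rule y_zero[OF vV sy']) (use T0 T1 dk in \<open>fastforce\<close>)
            then show False using ny by simp
          next
            case F1: False
            then have f1: "supp (slice V d v y 1) = supp z" using c1 by simp
            have "P" unfolding P_def
            proof (intro allI impI)
              fix F e assume "(F,e) \<in> A_rows C d" "v \<notin> F"
              show "(\<Sum>j\<in>A_cols (V-{v}) d. A_entry (F,e) j * z j) = 0"
                by (rule one_full_P[OF vV circ ky d1 f1 _ \<open>(F,e) \<in> A_rows C d\<close> \<open>v \<notin> F\<close>])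
                   (use T0 dk in \<open>fastforce\<close>)
            qed
            then show False using notP by simp
          qed
        next
          case F0: False
          then have f0: "supp (slice V d v y 0) = supp z" using c0 by simp
          show False
          proof (cases "slice V d v y 1 = (\<lambda>_. 0)")
            case T1: True
            have "P" unfolding P_def
            proof (intro allI impI)
              fix F e assume "(F,e) \<in> A_rows C d" "v \<notin> F"
              show "(\<Sum>j\<in>A_cols (V-{v}) d. A_entry (F,e) j * z j) = 0"
                by (rule one_full_P[OF vV circ ky dv0 f0 _ \<open>(F,e) \<in> A_rows C d\<close> \<open>v \<notin> F\<close>])
                   (use T1 dk in \<open>fastforce\<close>)
            qed
            then show False using notP by simp
          next
            case F1: False
            then have f1: "supp (slice V d v y 1) = supp z" using c1 by simp
            have "supp (emb V d v ?s z) \<subseteq> supp y"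
              by (rule y_full[OF vV sy']) (use f0 f1 in \<open>auto split: if_splits\<close>)
            then show False using sy by auto
          qed
        qed
      qed
      then show thesis by (intro that[of ?s]) simp_all
    qed
    have u: "\<forall>c. emb V d v s z c \<in> {-1, 0, 1}"
      using assms(3) sc by (simp add: A_unimodular_def unimodular_def)
    show "\<forall>c. z c \<in> {-1, 0, 1}"
    proof
      fix x
      show "z x \<in> {-1, 0, 1}"
      proof (cases "x \<in> A_cols (V-{v}) d")
        case True
        have "emb V d v s z (x(v:=0)) = z x" using emb_val[OF vV True dv0, of s z] s0 by simp
        then show ?thesis using u[rule_format, of "x(v:=0)"] by simp
      next
        case False
        then show ?thesis using kz by (simp add: int_kernel_vec_def)
      qed
    qed
  qed
qed

end
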